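(* For any $P,N>0$ with $\frac NP\le\frac{L-1}{L}$ and any $L\in\mathbb{Z}_{\ge2}$, $$\overline{C}_{L-1}(P,N)\ge\frac12\left(\ln\frac{(L-1)P}{LN}+\frac{LN}{(L-1)P}-1\right).$$
   Context: $\mathcal{B}^n(r)$ is the closed Euclidean ball of radius $r$ centered at the origin. For $x_1,\dots,x_L\in\mathbb{R}^n$ with centroid $\bar x=\frac1L\sum_ix_i$, $\overline{\mathrm{rad}}^2(x_1,\dots,x_L)=\frac1L\sum_i\|x_i-\bar x\|_2^2$. A finite $\mathcal{C}\subseteq\mathcal{B}^n(\sqrt{nP})$ is $(P,N,L-1)$-average-radius list-decodable if every $L$ distinct points of $\mathcal{C}$ have $\overline{\mathrm{rad}}^2>nN$. Rate $R(\mathcal{C})=\frac1n\ln|\mathcal{C}|$. $\overline{C}_{L-1}(P,N)=\limsup_{n\to\infty}\sup R(\mathcal{C})$ over such codes in $\mathcal{B}^n(\sqrt{nP})$. *)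

theory Defs
  imports "HOL-Analysis.Analysis" "HOL-Library.Liminf_Limsup"
begin

text \<open>Points of R^n are represented as functions nat => real vanishing outside {..<n}.\<close>

definition in_ball :: "nat \<Rightarrow> real \<Rightarrow> (nat \<Rightarrow> real) \<Rightarrow> bool" where
  "in_ball n r x \<longleftrightarrow> (\<forall>i\<ge>n. x i = 0) \<and> (\<Sum>i<n. (x i)\<^sup>2) \<le> r\<^sup>2"

definition centroid :: "(nat \<Rightarrow> real) set \<Rightarrow> (nat \<Rightarrow> real)" where
  "centroid S = (\<lambda>i. (\<Sum>x\<in>S. x i) / real (card S))"

definition avg_rad2 :: "nat \<Rightarrow> (nat \<Rightarrow> real) set \<Rightarrow> real" where
  "avg_rad2 n S = (\<Sum>x\<in>S. \<Sum>i<n. (x i - centroid S i)\<^sup>2) / real (card S)"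

definition list_decodable :: "nat \<Rightarrow> real \<Rightarrow> real \<Rightarrow> nat \<Rightarrow> (nat \<Rightarrow> real) set \<Rightarrow> bool" where
  "list_decodable n P N L C \<longleftrightarrow> finite C \<and> (\<forall>x\<in>C. in_ball n (sqrt (real n * P)) x) \<and>
     (\<forall>S\<subseteq>C. card S = L \<longrightarrow> avg_rad2 n S > real n * N)"

definition code_rate :: "nat \<Rightarrow> (nat \<Rightarrow> real) set \<Rightarrow> real" where
  "code_rate n C = ln (real (card C)) / real n"

text \<open>Capacity \<open>C_{L-1}(P,N)\<close>: limsup over n of the supremal rate of
  (P,N,L-1)-average-radius list-decodable codes, in the extended reals.\<close>
definition avg_rad_capacity :: "nat \<Rightarrow> real \<Rightarrow> real \<Rightarrow> ereal" where
  "avg_rad_capacity L P N = limsup (\<lambda>n. SUP C\<in>{C. list_decodable n P N L C}. ereal (code_rate n C))"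

end

theory Submission
  imports Defs "HOL-Probability.Probability"
begin

abbreviation "gm \<equiv> density lborel std_normal_density"

lemma gauss1:
  fixes \<alpha> e :: real
  assumes "2*\<alpha>+1 > 0"
  shows "(\<integral>\<^sup>+y. ennreal (exp (-\<alpha>*y\<^sup>2 + e*y)) \<partial>gm) = ennreal (exp (e\<^sup>2/(2*(2*\<alpha>+1))) / sqrt (2*\<alpha>+1))"
proof -
  define D where "D = 2*\<alpha>+1"
  have D: "D > 0" using assms D_def by simp
  define m where "m = e/D"
  define sg where "sg = 1/sqrt D"
  have sg: "sg > 0" using D sg_def by simp
  define K where "K = exp (e\<^sup>2/(2*D)) / sqrt D"
  have K: "K \<ge> 0" using D K_def by simp
  have pt: "std_normal_density y * exp (-\<alpha>*y\<^sup>2 + e*y) = K * normal_density m sg y" for y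
  proof -
    have "exp (- y\<^sup>2 / 2) * exp (-\<alpha>*y\<^sup>2 + e*y) = exp (e\<^sup>2/(2*D)) * exp (-(y - m)\<^sup>2 / (2 * sg\<^sup>2))"
    proof -
      have s2: "sg\<^sup>2 = 1/D" using D by (simp add: sg_def power_divide)
      have "- y\<^sup>2 / 2 + (-\<alpha>*y\<^sup>2 + e*y) = e\<^sup>2/(2*D) + (-(y - m)\<^sup>2 / (2 * sg\<^sup>2))"
      proof -
        have a: "\<alpha> = (D-1)/2" using D_def by simp
        have "(y - e/D)\<^sup>2 = y\<^sup>2 - 2*e*y/D + e\<^sup>2/D\<^sup>2" using D by (simp add: power2_diff field_simps power2_eq_square)
        then have "-(y - e/D)\<^sup>2 / (2 * (1/D)) = -D*y\<^sup>2/2 + e*y - e\<^sup>2/(2*D)" using D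
          by (simp add: field_simps power2_eq_square)
        then show ?thesis unfolding s2 m_def a by (simp add: field_simps)
      qed
      then show ?thesis unfolding exp_add[symmetric] by simp
    qed
    moreover have "1 / sqrt (2 * pi * sg\<^sup>2) = sqrt D / sqrt (2*pi)"
      using D by (simp add: sg_def real_sqrt_mult real_sqrt_divide field_simps)
    ultimately show ?thesis
    proof -
      assume h1: "exp (- y\<^sup>2 / 2) * exp (-\<alpha>*y\<^sup>2 + e*y) = exp (e\<^sup>2/(2*D)) * exp (-(y - m)\<^sup>2 / (2 * sg\<^sup>2))"
        and h2: "1 / sqrt (2 * pi * sg\<^sup>2) = sqrt D / sqrt (2*pi)"
      have "std_normal_density y * exp (-\<alpha>*y\<^sup>2 + e*y) = (1 / sqrt (2 * pi)) * (exp (- y\<^sup>2 / 2) * exp (-\<alpha>*y\<^sup>2 + e*y))"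
        unfolding std_normal_density_def by simp
      also have "\<dots> = (1 / sqrt (2 * pi)) * exp (e\<^sup>2/(2*D)) * exp (-(y - m)\<^sup>2 / (2 * sg\<^sup>2))" using h1 by simp
      also have "\<dots> = K * (1 / sqrt (2 * pi * sg\<^sup>2) * exp (-(y - m)\<^sup>2 / (2 * sg\<^sup>2)))"
        unfolding h2 K_def using D by simp
      finally show ?thesis unfolding normal_density_def by simp
    qed
  qed
  have "(\<integral>\<^sup>+y. ennreal (exp (-\<alpha>*y\<^sup>2 + e*y)) \<partial>gm) = (\<integral>\<^sup>+y. ennreal (std_normal_density y) * ennreal (exp (-\<alpha>*y\<^sup>2 + e*y)) \<partial>lborel)"
    by (subst nn_integral_density) auto
  also have "\<dots> = (\<integral>\<^sup>+y. ennreal K * ennreal (normal_density m sg y) \<partial>lborel)"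
  proof (rule nn_integral_cong)
    fix y
    have "ennreal (std_normal_density y) * ennreal (exp (-\<alpha>*y\<^sup>2 + e*y)) = ennreal (std_normal_density y * exp (-\<alpha>*y\<^sup>2 + e*y))"
      by (rule ennreal_mult[symmetric]) auto
    also have "\<dots> = ennreal (K * normal_density m sg y)" by (simp only: pt)
    also have "\<dots> = ennreal K * ennreal (normal_density m sg y)"
      by (rule ennreal_mult) (use K in auto)
    finally show "ennreal (std_normal_density y) * ennreal (exp (-\<alpha>*y\<^sup>2 + e*y)) = ennreal K * ennreal (normal_density m sg y)" .
  qed
  also have "\<dots> = ennreal K * (\<integral>\<^sup>+y. ennreal (normal_density m sg y) \<partial>lborel)"
    by (rule nn_integral_cmult) simp
  also have "(\<integral>\<^sup>+y. ennreal (normal_density m sg y) \<partial>lborel) = 1"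
  proof -
    interpret prob_space "density lborel (normal_density m sg)" by (rule prob_space_normal_density) (rule sg)
    have "emeasure (density lborel (normal_density m sg)) UNIV = 1" using emeasure_space_1 by simp
    then show ?thesis by (simp add: emeasure_density)
  qed
  finally show ?thesis unfolding K_def D_def by simp
qed

lemma prob_gm: "prob_space gm" by (rule prob_space_normal_density) simp

lemma pps: "product_prob_space (\<lambda>_::'i. gm)"
  unfolding product_prob_space_def product_prob_space_axioms_def product_sigma_finite_def
  using prob_gm by (auto intro: prob_space_imp_sigma_finite)

lemma G_step_arith:
  fixes D b k :: real
  assumes D: "D > 0" and b: "b \<ge> 0" and k: "k \<ge> 0" and pos: "D - 2*(k+1)*b > 0"
  shows "D - 2*b > 0" "D - 2*k*(b*D/(D-2*b)) > 0"
    "(1/sqrt (D - 2*b)) * (D powr (-(k - 1)/2) / sqrt (D - 2*k*(b*D/(D-2*b)))) = D powr (-((k+1) - 1)/2) / sqrt (D - 2*(k+1)*b)"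
proof -
  show db: "D - 2*b > 0" proof -
    have "2*k*b \<ge> 0" using b k by simp
    then show ?thesis using pos by (simp add: algebra_simps)
  qed
  have eq: "D - 2*k*(b*D/(D-2*b)) = D*(D - 2*(k+1)*b)/(D-2*b)"
  proof -
    have h: "(b*D/(D-2*b))*(D-2*b) = b*D" using db by simp
    have "(D - 2*k*(b*D/(D-2*b))) * (D-2*b) = D*(D-2*b) - 2*k*((b*D/(D-2*b))*(D-2*b))" by (simp add: algebra_simps)
    also have "\<dots> = D*(D - 2*(k+1)*b)" unfolding h by (simp add: algebra_simps)
    finally show ?thesis using db by (simp add: eq_divide_eq)
  qed
  show "D - 2*k*(b*D/(D-2*b)) > 0" unfolding eq using db pos D by simp
  have "sqrt (D - 2*b) * sqrt (D - 2*k*(b*D/(D-2*b))) = sqrt D * sqrt (D - 2*(k+1)*b)"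
    unfolding eq real_sqrt_mult[symmetric] using db by simp
  moreover have "D powr (-(k - 1)/2) = D powr (-((k+1) - 1)/2) * sqrt D"
  proof -
    have "D powr (-(k - 1)/2) = D powr (-((k+1) - 1)/2 + 1/2)" by (simp add: field_simps)
    also have "\<dots> = D powr (-((k+1) - 1)/2) * sqrt D" using D by (simp only: powr_add powr_half_sqrt[symmetric])
    finally show ?thesis .
  qed
  ultimately show "(1/sqrt (D - 2*b)) * (D powr (-(k - 1)/2) / sqrt (D - 2*k*(b*D/(D-2*b)))) = D powr (-((k+1) - 1)/2) / sqrt (D - 2*(k+1)*b)"
  proof -
    assume m1: "sqrt (D - 2*b) * sqrt (D - 2*k*(b*D/(D-2*b))) = sqrt D * sqrt (D - 2*(k+1)*b)"
      and m2: "D powr (-(k - 1)/2) = D powr (-((k+1) - 1)/2) * sqrt D"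
    have "(1/sqrt (D - 2*b)) * (D powr (-(k - 1)/2) / sqrt (D - 2*k*(b*D/(D-2*b))))
       = D powr (-(k - 1)/2) / (sqrt (D - 2*b) * sqrt (D - 2*k*(b*D/(D-2*b))))" by simp
    also have "\<dots> = (D powr (-((k+1) - 1)/2) * sqrt D) / (sqrt D * sqrt (D - 2*(k+1)*b))" unfolding m1 m2 ..
    also have "\<dots> = D powr (-((k+1) - 1)/2) / sqrt (D - 2*(k+1)*b)" using D by simp
    finally show ?thesis .
  qed
qed


lemma G:
  fixes a b :: real
  assumes "finite S" "2*a+1 > 0" "b \<ge> 0" "2*a+1 - 2*real (card S)*b > 0"
  shows "(\<integral>\<^sup>+y. ennreal (exp (-a*(\<Sum>j\<in>S. (y j)\<^sup>2) + b*(\<Sum>j\<in>S. y j)\<^sup>2)) \<partial>PiM S (\<lambda>_. gm))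
     = ennreal ((2*a+1) powr (-(real (card S) - 1)/2) / sqrt (2*a+1 - 2*real (card S)*b))"
  using assms
proof (induction S arbitrary: b rule: finite_induct)
  case empty
  have "(2*a+1) powr (1/2) / sqrt (2*a+1) = 1" using empty by (simp add: powr_half_sqrt)
  then show ?case by (simp add: PiM_empty)
next
  case (insert k S)
  interpret product_prob_space "\<lambda>_::'a. gm" by (rule pps)
  define D where "D = 2*a+1"
  have D: "D > 0" using insert D_def by simp
  have cS: "card (insert k S) = card S + 1" using insert by simp
  note ar = G_step_arith[OF D \<open>b \<ge> 0\<close> _ , of "real (card S)"]
  have pos: "D - 2*(real (card S)+1)*b > 0" using insert(6) cS D_def by (simp add: algebra_simps)
  note ar1 = ar(1)[OF _ pos] and ar2 = ar(2)[OF _ pos] and ar3 = ar(3)[OF _ pos]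
  define b' where "b' = b*D/(D-2*b)"
  have b': "b' \<ge> 0" using ar1 insert b'_def D by simp
  have IH: "(\<integral>\<^sup>+y. ennreal (exp (-a*(\<Sum>j\<in>S. (y j)\<^sup>2) + b'*(\<Sum>j\<in>S. y j)\<^sup>2)) \<partial>PiM S (\<lambda>_. gm))
     = ennreal (D powr (-(real (card S) - 1)/2) / sqrt (D - 2*real (card S)*b'))"
    using insert.IH[OF insert(4) b'] ar2 unfolding b'_def D_def by simp
  have "(\<integral>\<^sup>+y. ennreal (exp (-a*(\<Sum>j\<in>insert k S. (y j)\<^sup>2) + b*(\<Sum>j\<in>insert k S. y j)\<^sup>2)) \<partial>PiM (insert k S) (\<lambda>_. gm))
    = (\<integral>\<^sup>+x. (\<integral>\<^sup>+y. ennreal (exp (-a*(\<Sum>j\<in>insert k S. ((x(k:=y)) j)\<^sup>2) + b*(\<Sum>j\<in>insert k S. (x(k:=y)) j)\<^sup>2)) \<partial>gm) \<partial>PiM S (\<lambda>_. gm))"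
    by (rule product_nn_integral_insert) (use insert in auto)
  also have "\<dots> = (\<integral>\<^sup>+x. ennreal (1 / sqrt (D - 2*b)) * ennreal (exp (-a*(\<Sum>j\<in>S. (x j)\<^sup>2) + b'*(\<Sum>j\<in>S. x j)\<^sup>2)) \<partial>PiM S (\<lambda>_. gm))"
  proof (rule nn_integral_cong)
    fix x :: "'a \<Rightarrow> real"
    define q where "q = (\<Sum>j\<in>S. (x j)\<^sup>2)"
    define sm where "sm = (\<Sum>j\<in>S. x j)"
    have sm1: "(\<Sum>j\<in>insert k S. ((x(k:=y)) j)\<^sup>2) = y\<^sup>2 + q" for y
      unfolding q_def using insert by (simp add: sum.insert) (rule sum.cong, auto)
    have sm2: "(\<Sum>j\<in>insert k S. (x(k:=y)) j) = y + sm" for y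
      unfolding sm_def using insert by (simp add: sum.insert) (rule sum.cong, auto)
    have e: "exp (-a*(y\<^sup>2 + q) + b*(y + sm)\<^sup>2) = exp (-a*q + b* sm\<^sup>2) * exp (-(a-b)*y\<^sup>2 + (2*b* sm)*y)" for y
      unfolding exp_add[symmetric] by (simp add: algebra_simps power2_eq_square)
    have "(\<integral>\<^sup>+y. ennreal (exp (-a*(\<Sum>j\<in>insert k S. ((x(k:=y)) j)\<^sup>2) + b*(\<Sum>j\<in>insert k S. (x(k:=y)) j)\<^sup>2)) \<partial>gm)
      = (\<integral>\<^sup>+y. ennreal (exp (-a*q + b* sm\<^sup>2)) * ennreal (exp (-(a-b)*y\<^sup>2 + (2*b* sm)*y)) \<partial>gm)"
      unfolding sm1 sm2 e by (simp add: ennreal_mult)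
    also have "\<dots> = ennreal (exp (-a*q + b* sm\<^sup>2)) * (\<integral>\<^sup>+y. ennreal (exp (-(a-b)*y\<^sup>2 + (2*b* sm)*y)) \<partial>gm)"
      by (rule nn_integral_cmult) simp
    also have "(\<integral>\<^sup>+y. ennreal (exp (-(a-b)*y\<^sup>2 + (2*b* sm)*y)) \<partial>gm) = ennreal (exp ((2*b* sm)\<^sup>2/(2*(2*(a-b)+1))) / sqrt (2*(a-b)+1))"
      by (rule gauss1) (use ar1 D_def in simp)
    also have "ennreal (exp (-a*q + b* sm\<^sup>2)) * ennreal (exp ((2*b* sm)\<^sup>2/(2*(2*(a-b)+1))) / sqrt (2*(a-b)+1))
       = ennreal (1 / sqrt (D - 2*b)) * ennreal (exp (-a*q + b'* sm\<^sup>2))"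
    proof -
      have "2*(a-b)+1 = D - 2*b" unfolding D_def by simp
      moreover have "-a*q + b* sm\<^sup>2 + (2*b* sm)\<^sup>2/(2*(D - 2*b)) = -a*q + b'* sm\<^sup>2"
        unfolding b'_def using ar1 by (simp add: field_simps power2_eq_square)
      ultimately have "exp (-a*q + b* sm\<^sup>2) * (exp ((2*b* sm)\<^sup>2/(2*(2*(a-b)+1))) / sqrt (2*(a-b)+1))
         = (1 / sqrt (D - 2*b)) * exp (-a*q + b'* sm\<^sup>2)"
      proof -
        assume h1: "2*(a-b)+1 = D - 2*b" and h2: "-a*q + b* sm\<^sup>2 + (2*b* sm)\<^sup>2/(2*(D - 2*b)) = -a*q + b'* sm\<^sup>2"
        have "exp (-a*q + b* sm\<^sup>2) * (exp ((2*b* sm)\<^sup>2/(2*(2*(a-b)+1))) / sqrt (2*(a-b)+1))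
           = exp (-a*q + b* sm\<^sup>2 + (2*b* sm)\<^sup>2/(2*(D - 2*b))) / sqrt (D - 2*b)"
          unfolding h1 exp_add by simp
        also have "\<dots> = (1 / sqrt (D - 2*b)) * exp (-a*q + b'* sm\<^sup>2)" unfolding h2 by simp
        finally show ?thesis .
      qed
      note eqn = this
      have n1: "ennreal (exp (-a*q + b* sm\<^sup>2)) * ennreal (exp ((2*b* sm)\<^sup>2/(2*(2*(a-b)+1))) / sqrt (2*(a-b)+1))
        = ennreal (exp (-a*q + b* sm\<^sup>2) * (exp ((2*b* sm)\<^sup>2/(2*(2*(a-b)+1))) / sqrt (2*(a-b)+1)))"
        by (rule ennreal_mult'[symmetric]) simp
      have n2: "ennreal (1 / sqrt (D - 2*b)) * ennreal (exp (-a*q + b'* sm\<^sup>2)) = ennreal ((1 / sqrt (D - 2*b)) * exp (-a*q + b'* sm\<^sup>2))"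
        by (rule ennreal_mult'[symmetric]) (use ar1 in simp)
      show ?thesis unfolding n1 n2 eqn ..

    qed
    finally show "(\<integral>\<^sup>+y. ennreal (exp (-a*(\<Sum>j\<in>insert k S. ((x(k:=y)) j)\<^sup>2) + b*(\<Sum>j\<in>insert k S. (x(k:=y)) j)\<^sup>2)) \<partial>gm)
       = ennreal (1 / sqrt (D - 2*b)) * ennreal (exp (-a*(\<Sum>j\<in>S. (x j)\<^sup>2) + b'*(\<Sum>j\<in>S. x j)\<^sup>2))"
      unfolding q_def sm_def .
  qed
  also have "\<dots> = ennreal (1 / sqrt (D - 2*b)) * (\<integral>\<^sup>+x. ennreal (exp (-a*(\<Sum>j\<in>S. (x j)\<^sup>2) + b'*(\<Sum>j\<in>S. x j)\<^sup>2)) \<partial>PiM S (\<lambda>_. gm))"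
    by (rule nn_integral_cmult) simp
  also have "\<dots> = ennreal ((1 / sqrt (D - 2*b)) * (D powr (-(real (card S) - 1)/2) / sqrt (D - 2*real (card S)*b')))"
    unfolding IH using ar1 ar2 by (subst ennreal_mult) (auto simp: b'_def)
  also have "(1 / sqrt (D - 2*b)) * (D powr (-(real (card S) - 1)/2) / sqrt (D - 2*real (card S)*b'))
      = D powr (-((real (card S)+1) - 1)/2) / sqrt (D - 2*(real (card S)+1)*b)"
    unfolding b'_def by (rule ar3) simp
  finally show ?case unfolding cS D_def by (simp add: algebra_simps)
qed

definition QQ :: "nat \<Rightarrow> (nat \<Rightarrow> real) measure" where "QQ M = PiM {..<M} (\<lambda>_. gm)"
definition OM :: "nat \<Rightarrow> nat \<Rightarrow> (nat \<Rightarrow> nat \<Rightarrow> real) measure" where "OM n M = PiM {..<n} (\<lambda>_. QQ M)"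

lemma prob_QQ: "prob_space (QQ M)"
  unfolding QQ_def by (rule prob_space_PiM) (rule prob_gm)

lemma prob_OM: "prob_space (OM n M)"
  unfolding OM_def by (rule prob_space_PiM) (rule prob_QQ)

lemma pps_QQ: "product_prob_space (\<lambda>_::nat. QQ M)"
  unfolding product_prob_space_def product_prob_space_axioms_def product_sigma_finite_def
  using prob_QQ by (auto intro: prob_space_imp_sigma_finite)

definition hh :: "nat set \<Rightarrow> real \<Rightarrow> real \<Rightarrow> (nat \<Rightarrow> real) \<Rightarrow> real" where
  "hh T a b v = exp (-a*(\<Sum>j\<in>T. (v j)\<^sup>2) + b*(\<Sum>j\<in>T. v j)\<^sup>2)"

lemma hh_meas:
  assumes "T \<subseteq> I"
  shows "(\<lambda>v. hh T a b v) \<in> borel_measurable (PiM I (\<lambda>_. gm))"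
proof -
  have c: "(\<lambda>v. v j) \<in> borel_measurable (PiM I (\<lambda>_. gm))" if "j \<in> T" for j
    using that assms by (auto intro!: measurable_component_singleton[of j I "\<lambda>_. gm", simplified])
  have s1: "(\<lambda>v. \<Sum>j\<in>T. (v j)\<^sup>2) \<in> borel_measurable (PiM I (\<lambda>_. gm))"
    by (rule borel_measurable_sum) (use c in auto)
  have s2: "(\<lambda>v. \<Sum>j\<in>T. v j) \<in> borel_measurable (PiM I (\<lambda>_. gm))"
    by (rule borel_measurable_sum) (use c in auto)
  show ?thesis unfolding hh_def using s1 s2 by measurable
qed

lemma hh_meas': "T \<subseteq> I \<Longrightarrow> (\<lambda>v. ennreal (hh T a b v)) \<in> borel_measurable (PiM I (\<lambda>_. gm))"
  using hh_meas by measurable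

lemma marginal:
  assumes "T \<subseteq> {..<M}"
  shows "(\<integral>\<^sup>+v. ennreal (hh T a b v) \<partial>QQ M) = (\<integral>\<^sup>+v. ennreal (hh T a b v) \<partial>PiM T (\<lambda>_. gm))"
proof -
  interpret product_prob_space "\<lambda>_::nat. gm" by (rule pps)
  have "(\<integral>\<^sup>+v. ennreal (hh T a b v) \<partial>PiM T (\<lambda>_. gm))
      = (\<integral>\<^sup>+v. ennreal (hh T a b v) \<partial>distr (PiM {..<M} (\<lambda>_. gm)) (PiM T (\<lambda>_. gm)) (\<lambda>f. restrict f T))"
    using distr_restrict[OF assms] by simp
  also have "\<dots> = (\<integral>\<^sup>+v. ennreal (hh T a b (restrict v T)) \<partial>PiM {..<M} (\<lambda>_. gm))"
    by (rule nn_integral_distr) (use assms in \<open>auto intro: measurable_restrict_subset hh_meas'\<close>)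
  also have "\<dots> = (\<integral>\<^sup>+v. ennreal (hh T a b v) \<partial>PiM {..<M} (\<lambda>_. gm))"
    by (rule nn_integral_cong) (simp add: hh_def)
  finally show ?thesis unfolding QQ_def by simp
qed

lemma H:
  fixes a b :: real
  assumes "T \<subseteq> {..<M}" "2*a+1 > 0" "b \<ge> 0" "2*a+1 - 2*real (card T)*b > 0"
  shows "(\<integral>\<^sup>+\<omega>. (\<Prod>i<n. ennreal (hh T a b (\<omega> i))) \<partial>OM n M)
     = ennreal ((2*a+1) powr (-(real (card T) - 1)/2) / sqrt (2*a+1 - 2*real (card T)*b)) ^ n"
proof -
  interpret product_prob_space "\<lambda>_::nat. QQ M" by (rule pps_QQ)
  have fin: "finite T" using assms(1) finite_subset by blast
  have "(\<integral>\<^sup>+\<omega>. (\<Prod>i<n. ennreal (hh T a b (\<omega> i))) \<partial>OM n M) = (\<Prod>i<n. (\<integral>\<^sup>+v. ennreal (hh T a b v) \<partial>QQ M))"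
    unfolding OM_def by (rule product_nn_integral_prod) (use assms(1) in \<open>auto simp: QQ_def intro: hh_meas'\<close>)
  also have "\<dots> = (\<integral>\<^sup>+v. ennreal (hh T a b v) \<partial>QQ M) ^ n" by simp
  also have "(\<integral>\<^sup>+v. ennreal (hh T a b v) \<partial>QQ M) = ennreal ((2*a+1) powr (-(real (card T) - 1)/2) / sqrt (2*a+1 - 2*real (card T)*b))"
    by (subst marginal[OF assms(1)]) (unfold hh_def, rule G[OF fin assms(2-4)])
  finally show ?thesis .
qed

lemma prod_meas:
  assumes "T \<subseteq> {..<M}"
  shows "(\<lambda>\<omega>. \<Prod>i<n. ennreal (hh T a b (\<omega> i))) \<in> borel_measurable (OM n M)"
proof -
  have "(\<lambda>\<omega>. ennreal (hh T a b (\<omega> i))) \<in> borel_measurable (OM n M)" if "i < n" for i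
  proof -
    have "(\<lambda>\<omega>. \<omega> i) \<in> measurable (OM n M) (QQ M)"
      unfolding OM_def using that by (intro measurable_component_singleton) auto
    moreover have "(\<lambda>v. ennreal (hh T a b v)) \<in> borel_measurable (QQ M)"
      unfolding QQ_def by (rule hh_meas'[OF assms])
    ultimately show ?thesis by (rule measurable_compose)
  qed
  then show ?thesis by (intro borel_measurable_prod_ennreal) auto
qed

lemma integral_H:
  assumes "T \<subseteq> {..<M}" "2*a+1 > 0" "b \<ge> 0" "2*a+1 - 2*real (card T)*b > 0" "K \<ge> 0"
  shows "(\<integral>\<^sup>+\<omega>. ennreal K * (\<Prod>i<n. ennreal (hh T a b (\<omega> i))) \<partial>OM n M)
     = ennreal (K * ((2*a+1) powr (-(real (card T) - 1)/2) / sqrt (2*a+1 - 2*real (card T)*b)) ^ n)"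
proof -
  have "(\<integral>\<^sup>+\<omega>. ennreal K * (\<Prod>i<n. ennreal (hh T a b (\<omega> i))) \<partial>OM n M)
     = ennreal K * (\<integral>\<^sup>+\<omega>. (\<Prod>i<n. ennreal (hh T a b (\<omega> i))) \<partial>OM n M)"
    by (rule nn_integral_cmult) (rule prod_meas[OF assms(1)])
  also have "\<dots> = ennreal K * ennreal ((2*a+1) powr (-(real (card T) - 1)/2) / sqrt (2*a+1 - 2*real (card T)*b)) ^ n"
    unfolding H[OF assms(1-4)] ..
  also have "\<dots> = ennreal (K * ((2*a+1) powr (-(real (card T) - 1)/2) / sqrt (2*a+1 - 2*real (card T)*b)) ^ n)"
    using assms by (simp add: ennreal_mult ennreal_power)
  finally show ?thesis .
qed

lemma sum_integral_H:
  assumes fin: "finite \<T>" and sub: "\<And>T. T \<in> \<T> \<Longrightarrow> T \<subseteq> {..<M}" and card: "\<And>T. T \<in> \<T> \<Longrightarrow> card T = k"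
   and "2*a+1 > 0" "b \<ge> 0" "2*a+1 - 2*real k*b > 0" "K \<ge> 0"
  shows "(\<integral>\<^sup>+\<omega>. (\<Sum>T\<in>\<T>. ennreal K * (\<Prod>i<n. ennreal (hh T a b (\<omega> i)))) \<partial>OM n M)
     = ennreal (real (card \<T>) * (K * ((2*a+1) powr (-(real k - 1)/2) / sqrt (2*a+1 - 2*real k*b)) ^ n))"
proof -
  have "(\<integral>\<^sup>+\<omega>. (\<Sum>T\<in>\<T>. ennreal K * (\<Prod>i<n. ennreal (hh T a b (\<omega> i)))) \<partial>OM n M)
      = (\<Sum>T\<in>\<T>. (\<integral>\<^sup>+\<omega>. ennreal K * (\<Prod>i<n. ennreal (hh T a b (\<omega> i))) \<partial>OM n M))"
    by (rule nn_integral_sum) (use prod_meas sub in \<open>auto intro!: borel_measurable_times_ennreal\<close>)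
  also have "\<dots> = (\<Sum>T\<in>\<T>. ennreal (K * ((2*a+1) powr (-(real k - 1)/2) / sqrt (2*a+1 - 2*real k*b)) ^ n))"
    by (rule sum.cong) (use integral_H[OF sub _ assms(5) _ assms(7)] card assms(4,6) in auto)
  also have "\<dots> = ennreal (real (card \<T>) * (K * ((2*a+1) powr (-(real k - 1)/2) / sqrt (2*a+1 - 2*real k*b)) ^ n))"
    using assms by (simp add: ennreal_mult ennreal_of_nat_eq_real_of_nat)
  finally show ?thesis .
qed

definition PhiE :: "nat \<Rightarrow> nat \<Rightarrow> nat \<Rightarrow> real \<Rightarrow> real \<Rightarrow> real \<Rightarrow> real \<Rightarrow> real \<Rightarrow> (nat \<Rightarrow> nat \<Rightarrow> real) \<Rightarrow> ennreal" where
  "PhiE n M L t lam lam2 K1 K2 \<omega> =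
    (\<Sum>T\<in>(\<lambda>a. {a}) ` {..<M}. ennreal K1 * (\<Prod>i<n. ennreal (hh T (-t) 0 (\<omega> i))))
  + (\<Sum>T\<in>{T. T \<subseteq> {..<M} \<and> card T = L}. ennreal K2 * (\<Prod>i<n. ennreal (hh T lam (lam/L) (\<omega> i))))
  + (\<Sum>T\<in>{T. T \<subseteq> {..<M} \<and> card T = 2}. ennreal 1 * (\<Prod>i<n. ennreal (hh T lam2 (lam2/2) (\<omega> i))))"

lemma total_integral:
  assumes t: "0 \<le> t" "t < 1/2" and lam: "lam \<ge> 0" "lam2 \<ge> 0" and L: "L \<ge> 1" and K: "K1 \<ge> 0" "K2 \<ge> 0"
  shows "(\<integral>\<^sup>+\<omega>. PhiE n M L t lam lam2 K1 K2 \<omega> \<partial>OM n M)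
   = ennreal (real M * (K1 * (1/sqrt(1-2*t))^n) + real (M choose L) * (K2 * ((2*lam+1) powr (-(real L-1)/2))^n)
       + real (M choose 2) * (1 * ((2*lam2+1) powr (-1/2))^n))"
proof -
  let ?A = "\<lambda>\<omega>. (\<Sum>T\<in>(\<lambda>a. {a}) ` {..<M}. ennreal K1 * (\<Prod>i<n. ennreal (hh T (-t) 0 (\<omega> i))))"
  let ?B = "\<lambda>\<omega>. (\<Sum>T\<in>{T. T \<subseteq> {..<M} \<and> card T = L}. ennreal K2 * (\<Prod>i<n. ennreal (hh T lam (lam/L) (\<omega> i))))"
  let ?C = "\<lambda>\<omega>. (\<Sum>T\<in>{T. T \<subseteq> {..<M} \<and> card T = 2}. ennreal 1 * (\<Prod>i<n. ennreal (hh T lam2 (lam2/2) (\<omega> i))))"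
  have mA: "?A \<in> borel_measurable (OM n M)" by (intro borel_measurable_sum borel_measurable_times_ennreal measurable_const) (use prod_meas in auto)
  have mB: "?B \<in> borel_measurable (OM n M)" by (intro borel_measurable_sum borel_measurable_times_ennreal measurable_const) (use prod_meas in auto)
  have mC: "?C \<in> borel_measurable (OM n M)" by (intro borel_measurable_sum borel_measurable_times_ennreal measurable_const) (use prod_meas in auto)
  have fA: "finite ((\<lambda>a. {a}) ` {..<M})" by simp
  have fB: "finite {T. T \<subseteq> {..<M} \<and> card T = k}" for k by (rule finite_subset[of _ "Pow {..<M}"]) auto
  have cA: "card ((\<lambda>a. {a}) ` {..<M}) = M" by (subst card_image) (auto simp: inj_on_def)
  have cB: "card {T. T \<subseteq> {..<M} \<and> card T = k} = M choose k" for k using n_subsets[of "{..<M}" k] by simp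
  have iA: "(\<integral>\<^sup>+\<omega>. ?A \<omega> \<partial>OM n M) = ennreal (real M * (K1 * (1/sqrt(1-2*t))^n))"
  proof -
    have p1: "\<And>T. T \<in> (\<lambda>a. {a}) ` {..<M} \<Longrightarrow> T \<subseteq> {..<M}" by auto
    have p2: "\<And>T. T \<in> (\<lambda>a. {a}) ` {..<M} \<Longrightarrow> card T = 1" by auto
    show ?thesis using sum_integral_H[OF fA p1 p2, of "-t" 0 K1 n] t K by (simp add: cA)
  qed
  have iB: "(\<integral>\<^sup>+\<omega>. ?B \<omega> \<partial>OM n M) = ennreal (real (M choose L) * (K2 * ((2*lam+1) powr (-(real L-1)/2))^n))"
  proof -
    have e: "2*lam+1 - 2*real L*(lam/real L) = 1" using L by simp
    have pos: "2*lam+1 - 2*real L*(lam/real L) > 0" unfolding e by simp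
    have p1: "\<And>T. T \<in> {T. T \<subseteq> {..<M} \<and> card T = L} \<Longrightarrow> T \<subseteq> {..<M}" by auto
    have p2: "\<And>T. T \<in> {T. T \<subseteq> {..<M} \<and> card T = L} \<Longrightarrow> card T = L" by auto
    have "(\<integral>\<^sup>+\<omega>. ?B \<omega> \<partial>OM n M) = ennreal (real (card {T. T \<subseteq> {..<M} \<and> card T = L}) * (K2 * ((2*lam+1) powr (-(real L - 1)/2) / sqrt (2*lam+1 - 2*real L*(lam/real L))) ^ n))"
      by (rule sum_integral_H[OF fB p1 p2]) (use lam K pos in auto)
    then show ?thesis unfolding e cB real_sqrt_one div_by_1 .
  qed
  have iC: "(\<integral>\<^sup>+\<omega>. ?C \<omega> \<partial>OM n M) = ennreal (real (M choose 2) * (1 * ((2*lam2+1) powr (-1/2))^n))"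
  proof -
    have e: "2*lam2+1 - 2*real 2*(lam2/2) = 1" by simp
    have pos: "2*lam2+1 - 2*real 2*(lam2/2) > 0" unfolding e by simp
    have p1: "\<And>T. T \<in> {T. T \<subseteq> {..<M} \<and> card T = 2} \<Longrightarrow> T \<subseteq> {..<M}" by auto
    have p2: "\<And>T. T \<in> {T. T \<subseteq> {..<M} \<and> card T = 2} \<Longrightarrow> card T = 2" by auto
    have "(\<integral>\<^sup>+\<omega>. ?C \<omega> \<partial>OM n M) = ennreal (real (card {T. T \<subseteq> {..<M} \<and> card T = 2}) * (1 * ((2*lam2+1) powr (-(real 2 - 1)/2) / sqrt (2*lam2+1 - 2*real 2*(lam2/2))) ^ n))"
      by (rule sum_integral_H[OF fB p1 p2]) (use lam pos in auto)
    then show ?thesis unfolding e cB real_sqrt_one div_by_1 by simp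
  qed
  have "(\<integral>\<^sup>+\<omega>. PhiE n M L t lam lam2 K1 K2 \<omega> \<partial>OM n M) = (\<integral>\<^sup>+\<omega>. ?A \<omega> + ?B \<omega> \<partial>OM n M) + (\<integral>\<^sup>+\<omega>. ?C \<omega> \<partial>OM n M)"
    unfolding PhiE_def by (rule nn_integral_add) (use mA mB mC in auto)
  also have "(\<integral>\<^sup>+\<omega>. ?A \<omega> + ?B \<omega> \<partial>OM n M) = (\<integral>\<^sup>+\<omega>. ?A \<omega> \<partial>OM n M) + (\<integral>\<^sup>+\<omega>. ?B \<omega> \<partial>OM n M)"
    by (rule nn_integral_add) (use mA mB in auto)
  finally show ?thesis unfolding iA iB iC using t K
    by (simp add: ennreal_plus[symmetric] del: ennreal_plus)
qed

lemma var_identity: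
  fixes z :: "nat \<Rightarrow> real"
  assumes "finite T" "card T = L" "L > 0"
  shows "(\<Sum>j\<in>T. (z j - (\<Sum>k\<in>T. z k)/L)\<^sup>2) = (\<Sum>j\<in>T. (z j)\<^sup>2) - (\<Sum>j\<in>T. z j)\<^sup>2 / L"
proof -
  define m where "m = (\<Sum>k\<in>T. z k)/L"
  have "(\<Sum>j\<in>T. (z j - m)\<^sup>2) = (\<Sum>j\<in>T. (z j)\<^sup>2 - 2*m*z j + m\<^sup>2)"
    by (rule sum.cong) (auto simp: power2_diff)
  also have "\<dots> = (\<Sum>j\<in>T. (z j)\<^sup>2) - 2*m*(\<Sum>j\<in>T. z j) + L * m\<^sup>2"
    using assms by (simp add: sum.distrib sum_subtractf sum_distrib_left)
  also have "\<dots> = (\<Sum>j\<in>T. (z j)\<^sup>2) - (\<Sum>j\<in>T. z j)\<^sup>2 / L"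
    using assms unfolding m_def by (simp add: field_simps power2_eq_square)
  finally show ?thesis unfolding m_def .
qed

definition Wt :: "nat \<Rightarrow> nat set \<Rightarrow> (nat \<Rightarrow> nat \<Rightarrow> real) \<Rightarrow> real" where
  "Wt n T \<omega> = (\<Sum>i<n. (\<Sum>j\<in>T. (\<omega> i j)\<^sup>2) - (\<Sum>j\<in>T. \<omega> i j)\<^sup>2 / card T)"

definition xv :: "nat \<Rightarrow> real \<Rightarrow> (nat \<Rightarrow> nat \<Rightarrow> real) \<Rightarrow> nat \<Rightarrow> (nat \<Rightarrow> real)" where
  "xv n Pp \<omega> j = (\<lambda>i. if i < n then sqrt Pp * \<omega> i j else 0)"

lemma avg_rad2_eq:
  assumes inj: "inj_on (xv n Pp \<omega>) T" and fin: "finite T" and card: "card T = L" and L: "L > 0" and Pp: "Pp > 0"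
  shows "avg_rad2 n (xv n Pp \<omega> ` T) = Pp * Wt n T \<omega> / L"
proof -
  let ?x = "xv n Pp \<omega>"
  have cS: "card (?x ` T) = L" using card_image[OF inj] card by simp
  have cen: "centroid (?x ` T) i = (\<Sum>j\<in>T. ?x j i) / L" for i
    unfolding centroid_def cS using sum.reindex[OF inj, of "\<lambda>y. y i"] by simp
  have "(\<Sum>y\<in>?x ` T. \<Sum>i<n. (y i - centroid (?x ` T) i)\<^sup>2) = (\<Sum>j\<in>T. \<Sum>i<n. (?x j i - (\<Sum>k\<in>T. ?x k i) / L)\<^sup>2)"
    unfolding cen using sum.reindex[OF inj, of "\<lambda>y. \<Sum>i<n. (y i - (\<Sum>k\<in>T. ?x k i) / L)\<^sup>2"] by simp
  also have "\<dots> = (\<Sum>i<n. \<Sum>j\<in>T. (?x j i - (\<Sum>k\<in>T. ?x k i) / L)\<^sup>2)"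
    by (rule sum.swap)
  also have "\<dots> = (\<Sum>i<n. (\<Sum>j\<in>T. (?x j i)\<^sup>2) - (\<Sum>j\<in>T. ?x j i)\<^sup>2 / L)"
    by (rule sum.cong) (auto intro: var_identity[OF fin card L])
  also have "\<dots> = (\<Sum>i<n. Pp * ((\<Sum>j\<in>T. (\<omega> i j)\<^sup>2) - (\<Sum>j\<in>T. \<omega> i j)\<^sup>2 / L))"
  proof (rule sum.cong)
    fix i assume "i \<in> {..<n}"
    then have xi: "?x j i = sqrt Pp * \<omega> i j" for j unfolding xv_def by simp
    have "(\<Sum>j\<in>T. (?x j i)\<^sup>2) = Pp * (\<Sum>j\<in>T. (\<omega> i j)\<^sup>2)"
      unfolding xi using Pp by (simp add: power_mult_distrib sum_distrib_left)
    moreover have "(\<Sum>j\<in>T. ?x j i)\<^sup>2 = Pp * (\<Sum>j\<in>T. \<omega> i j)\<^sup>2"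
      unfolding xi using Pp by (simp add: power_mult_distrib sum_distrib_left[symmetric])
    ultimately show "(\<Sum>j\<in>T. (?x j i)\<^sup>2) - (\<Sum>j\<in>T. ?x j i)\<^sup>2 / L = Pp * ((\<Sum>j\<in>T. (\<omega> i j)\<^sup>2) - (\<Sum>j\<in>T. \<omega> i j)\<^sup>2 / L)"
      by (simp add: algebra_simps)
  qed simp
  also have "\<dots> = Pp * Wt n T \<omega>" unfolding Wt_def card by (simp add: sum_distrib_left)
  finally show ?thesis unfolding avg_rad2_def cS by simp
qed

definition BadS :: "nat \<Rightarrow> nat \<Rightarrow> nat \<Rightarrow> real \<Rightarrow> real \<Rightarrow> (nat \<Rightarrow> nat \<Rightarrow> real) \<Rightarrow> nat set set" where
  "BadS n M L r c \<omega> = (\<lambda>a. {a}) ` {a\<in>{..<M}. (\<Sum>i<n. (\<omega> i a)\<^sup>2) > n*r}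
     \<union> {T. T \<subseteq> {..<M} \<and> card T = L \<and> Wt n T \<omega> \<le> c}
     \<union> {T. T \<subseteq> {..<M} \<and> card T = 2 \<and> Wt n T \<omega> \<le> 0}"

lemma construct:
  fixes \<omega> :: "nat \<Rightarrow> nat \<Rightarrow> real"
  assumes Pp: "Pp > 0" and P: "P > 0" and N: "N > 0" and L: "L \<ge> 2"
    and small: "real (card (BadS n M L (P/Pp) (n*L*N/Pp) \<omega>)) < real M / 2"
  shows "\<exists>C. list_decodable n P N L C \<and> real (card C) > real M / 2"
proof -
  define r where "r = P/Pp"
  define c where "c = real n * real L * N / Pp"
  define Bad where "Bad = BadS n M L r c \<omega>"
  have finB: "finite Bad"
    by (rule finite_subset[of _ "Pow {..<M}"]) (auto simp: Bad_def BadS_def)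
  have ne: "Z \<noteq> {}" if "Z \<in> Bad" for Z
    using that L unfolding Bad_def BadS_def by auto
  define rep where "rep Z = (SOME a. a \<in> Z)" for Z :: "nat set"
  have rep: "rep Z \<in> Z" if "Z \<in> Bad" for Z
    unfolding rep_def using ne[OF that] by (auto intro: someI_ex)
  define K where "K = {..<M} - rep ` Bad"
  have noBad: "\<not> Z \<subseteq> K" if "Z \<in> Bad" for Z
    using rep[OF that] that unfolding K_def by auto
  have "card {..<M} - card (rep ` Bad) \<le> card K"
    unfolding K_def by (rule diff_card_le_card_Diff) (use finB in simp)
  moreover have "card (rep ` Bad) \<le> card Bad" using finB by (rule card_image_le)
  ultimately have "M \<le> card K + card Bad" by simp
  then have "real M \<le> real (card K) + real (card Bad)" by linarith
  then have "real M - real (card Bad) \<le> real (card K)" by linarith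
  then have cK: "real (card K) > real M / 2" using small unfolding Bad_def r_def c_def by linarith
  define x where "x = xv n Pp \<omega>"
  have KM: "K \<subseteq> {..<M}" unfolding K_def by auto
  have inj: "inj_on x K"
  proof (rule inj_onI, rule ccontr)
    fix a b assume a: "a \<in> K" and b: "b \<in> K" and eq: "x a = x b" and ne: "a \<noteq> b"
    have w: "\<omega> i a = \<omega> i b" if "i < n" for i
    proof -
      have "x a i = x b i" using eq by simp
      then show ?thesis using that Pp unfolding x_def xv_def by simp
    qed
    have "Wt n {a,b} \<omega> = 0" unfolding Wt_def using ne w
      by (intro sum.neutral) (auto simp: power2_eq_square)
    then have "{a,b} \<in> Bad" using a b ne KM unfolding Bad_def BadS_def by auto
    then show False using noBad a b by auto
  qed
  define C where "C = x ` K"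
  have cC: "card C = card K" unfolding C_def using card_image[OF inj] .
  have "list_decodable n P N L C"
    unfolding list_decodable_def
  proof (intro conjI ballI allI impI)
    show "finite C" unfolding C_def using KM finite_subset by blast
  next
    fix y assume "y \<in> C"
    then obtain a where a: "a \<in> K" and y: "y = x a" unfolding C_def by auto
    have "{a} \<notin> Bad" using noBad a by auto
    then have le: "(\<Sum>i<n. (\<omega> i a)\<^sup>2) \<le> n*r" using a KM unfolding Bad_def BadS_def by auto
    have "(\<Sum>i<n. (y i)\<^sup>2) = Pp * (\<Sum>i<n. (\<omega> i a)\<^sup>2)"
      unfolding y x_def xv_def using Pp by (simp add: power_mult_distrib sum_distrib_left)
    also have "\<dots> \<le> Pp * (n*r)" using le Pp by simp
    also have "\<dots> = (sqrt (real n * P))\<^sup>2" unfolding r_def using Pp P by simp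
    finally show "in_ball n (sqrt (real n * P)) y" unfolding in_ball_def y x_def xv_def by simp
  next
    fix S assume S: "S \<subseteq> C" and cS: "card S = L"
    define T where "T = K \<inter> x -` S"
    have TS: "x ` T = S" using S unfolding T_def C_def by auto
    have injT: "inj_on x T" using inj unfolding T_def by (rule inj_on_subset) auto
    have cT: "card T = L" using card_image[OF injT] TS cS by simp
    have finT: "finite T" unfolding T_def using KM finite_subset by blast
    have "T \<notin> Bad" using noBad unfolding T_def by auto
    then have Wc: "Wt n T \<omega> > c" using cT KM unfolding Bad_def BadS_def T_def by auto
    have "avg_rad2 n S = Pp * Wt n T \<omega> / L"
      unfolding TS[symmetric] x_def by (rule avg_rad2_eq) (use injT finT cT L Pp x_def in auto)
    also have "\<dots> > Pp * c / L" using Wc Pp L by (simp add: divide_strict_right_mono)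
    also have "Pp * c / L = real n * N" unfolding c_def using Pp L by simp
    finally show "avg_rad2 n S > real n * N" .
  qed
  then show ?thesis using cK cC by auto
qed

lemma card_le_sum:
  fixes f :: "'a \<Rightarrow> ennreal"
  assumes "finite A" "B \<subseteq> A" "\<And>T. T \<in> B \<Longrightarrow> 1 \<le> f T"
  shows "ennreal (real (card B)) \<le> (\<Sum>T\<in>A. f T)"
proof -
  have "ennreal (real (card B)) = (\<Sum>T\<in>B. (1::ennreal))"
    by (simp add: ennreal_of_nat_eq_real_of_nat)
  also have "\<dots> \<le> (\<Sum>T\<in>B. f T)" by (rule sum_mono) (rule assms(3))
  also have "\<dots> \<le> (\<Sum>T\<in>A. f T)" by (rule sum_mono2) (use assms in auto)
  finally show ?thesis .
qed

lemma prod_hh: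
  assumes "card T = k" "k > 0"
  shows "(\<Prod>i<n. ennreal (hh T a (a/k) (\<omega> i))) = ennreal (exp (-a * Wt n T \<omega>))"
proof -
  have "(\<Prod>i<n. ennreal (hh T a (a/k) (\<omega> i))) = ennreal (\<Prod>i<n. hh T a (a/k) (\<omega> i))"
    by (rule prod_ennreal) (simp add: hh_def)
  also have "(\<Prod>i<n. hh T a (a/k) (\<omega> i)) = exp (\<Sum>i<n. -a*((\<Sum>j\<in>T. (\<omega> i j)\<^sup>2) - (\<Sum>j\<in>T. \<omega> i j)\<^sup>2 / k))"
    unfolding exp_sum[OF finite_lessThan] hh_def
    by (rule prod.cong) (simp_all add: algebra_simps)
  also have "(\<Sum>i<n. -a*((\<Sum>j\<in>T. (\<omega> i j)\<^sup>2) - (\<Sum>j\<in>T. \<omega> i j)\<^sup>2 / k)) = -a * Wt n T \<omega>"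
    unfolding Wt_def assms(1) by (simp add: sum_distrib_left)
  finally show ?thesis .
qed

lemma prod_hh1:
  fixes n :: nat
  shows "(\<Prod>i<n. ennreal (hh {a} (-t) 0 (\<omega> i))) = ennreal (exp (t * (\<Sum>i<n. (\<omega> i a)\<^sup>2)))"
proof -
  have "(\<Prod>i<n. ennreal (hh {a} (-t) 0 (\<omega> i))) = ennreal (\<Prod>i<n. hh {a} (-t) 0 (\<omega> i))"
    by (rule prod_ennreal) (simp add: hh_def)
  also have "(\<Prod>i<n. hh {a} (-t) 0 (\<omega> i)) = exp (\<Sum>i<n. t * (\<omega> i a)\<^sup>2)"
    unfolding hh_def by (subst exp_sum) auto
  finally show ?thesis by (simp add: sum_distrib_left)
qed

lemma bad_bound:
  assumes t: "t \<ge> 0" and lam: "lam \<ge> 0" "lam2 \<ge> 0" and L: "L \<ge> 1"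
  shows "ennreal (real (card (BadS n M L r c \<omega>))) \<le> PhiE n M L t lam lam2 (exp (-t*n*r)) (exp (lam*c)) \<omega>"
proof -
  define B1 where "B1 = (\<lambda>a. {a}) ` {a\<in>{..<M}. (\<Sum>i<n. (\<omega> i a)\<^sup>2) > n*r}"
  define B2 where "B2 = {T. T \<subseteq> {..<M} \<and> card T = L \<and> Wt n T \<omega> \<le> c}"
  define B3 where "B3 = {T. T \<subseteq> {..<M} \<and> card T = 2 \<and> Wt n T \<omega> \<le> 0}"
  have fB: "finite {T. T \<subseteq> {..<M} \<and> card T = k}" for k by (rule finite_subset[of _ "Pow {..<M}"]) auto
  have "card (BadS n M L r c \<omega>) \<le> card (B1 \<union> B2) + card B3"
    unfolding BadS_def B1_def B2_def B3_def by (rule card_Un_le)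
  also have "card (B1 \<union> B2) \<le> card B1 + card B2" by (rule card_Un_le)
  finally have cle: "real (card (BadS n M L r c \<omega>)) \<le> real (card B1) + real (card B2) + real (card B3)" by linarith
  have e1: "ennreal (real (card B1)) \<le> (\<Sum>T\<in>(\<lambda>a. {a}) ` {..<M}. ennreal (exp (-t*n*r)) * (\<Prod>i<n. ennreal (hh T (-t) 0 (\<omega> i))))"
  proof (rule card_le_sum)
    fix T assume "T \<in> B1"
    then obtain a where T: "T = {a}" and gt: "(\<Sum>i<n. (\<omega> i a)\<^sup>2) > n*r" unfolding B1_def by auto
    have "ennreal (exp (-t*n*r)) * (\<Prod>i<n. ennreal (hh T (-t) 0 (\<omega> i))) = ennreal (exp (-t*n*r + t * (\<Sum>i<n. (\<omega> i a)\<^sup>2)))"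
      unfolding T prod_hh1 exp_add by (simp add: ennreal_mult)
    moreover have "-t*n*r + t * (\<Sum>i<n. (\<omega> i a)\<^sup>2) \<ge> 0"
    proof -
      have "t * (n*r) \<le> t * (\<Sum>i<n. (\<omega> i a)\<^sup>2)" using gt t by (intro mult_left_mono) auto
      then show ?thesis by (simp add: algebra_simps)
    qed
    ultimately show "1 \<le> ennreal (exp (-t*n*r)) * (\<Prod>i<n. ennreal (hh T (-t) 0 (\<omega> i)))" by simp
  qed (auto simp: B1_def)
  have e2: "ennreal (real (card B2)) \<le> (\<Sum>T\<in>{T. T \<subseteq> {..<M} \<and> card T = L}. ennreal (exp (lam*c)) * (\<Prod>i<n. ennreal (hh T lam (lam/L) (\<omega> i))))"
  proof (rule card_le_sum)
    fix T assume "T \<in> B2"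
    then have cT: "card T = L" and W: "Wt n T \<omega> \<le> c" unfolding B2_def by auto
    have "ennreal (exp (lam*c)) * (\<Prod>i<n. ennreal (hh T lam (lam/L) (\<omega> i))) = ennreal (exp (lam*c + -lam * Wt n T \<omega>))"
    proof -
      have L0: "L > 0" using L by simp
      show ?thesis unfolding prod_hh[OF cT L0] exp_add by (simp add: ennreal_mult)
    qed
    moreover have "lam*c + -lam * Wt n T \<omega> \<ge> 0"
    proof -
      have "lam * Wt n T \<omega> \<le> lam * c" using W lam by (intro mult_left_mono) auto
      then show ?thesis by simp
    qed
    ultimately show "1 \<le> ennreal (exp (lam*c)) * (\<Prod>i<n. ennreal (hh T lam (lam/L) (\<omega> i)))" by simp
  qed (auto simp: B2_def fB)
  have e3: "ennreal (real (card B3)) \<le> (\<Sum>T\<in>{T. T \<subseteq> {..<M} \<and> card T = 2}. ennreal 1 * (\<Prod>i<n. ennreal (hh T lam2 (lam2/2) (\<omega> i))))"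
  proof (rule card_le_sum)
    fix T assume "T \<in> B3"
    then have cT: "card T = 2" and W: "Wt n T \<omega> \<le> 0" unfolding B3_def by auto
    have "ennreal 1 * (\<Prod>i<n. ennreal (hh T lam2 (lam2/2) (\<omega> i))) = ennreal (exp (-lam2 * Wt n T \<omega>))"
      using prod_hh[OF cT, where a=lam2 and n=n and \<omega>=\<omega>] by simp
    moreover have "-lam2 * Wt n T \<omega> \<ge> 0" using W lam by (simp add: mult_nonneg_nonpos)
    ultimately show "1 \<le> ennreal 1 * (\<Prod>i<n. ennreal (hh T lam2 (lam2/2) (\<omega> i)))" by simp
  qed (auto simp: B3_def fB)
  have "ennreal (real (card (BadS n M L r c \<omega>))) \<le> ennreal (real (card B1) + real (card B2) + real (card B3))"
    using cle by (rule ennreal_leI)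
  also have "\<dots> = ennreal (real (card B1)) + ennreal (real (card B2)) + ennreal (real (card B3))"
    by (simp add: ennreal_plus)
  also have "\<dots> \<le> PhiE n M L t lam lam2 (exp (-t*n*r)) (exp (lam*c)) \<omega>"
    unfolding PhiE_def by (intro add_mono e1 e2 e3)
  finally show ?thesis .
qed

lemma exists_code:
  fixes n M L :: nat and P N Pp t lam lam2 :: real
  assumes Pp: "Pp > 0" and P: "P > 0" and N: "N > 0" and L: "L \<ge> 2"
    and t: "0 \<le> t" "t < 1/2" and lam: "lam \<ge> 0" "lam2 \<ge> 0"
    and E: "real M * (exp (-t*n*(P/Pp)) * (1/sqrt(1-2*t))^n)
      + real (M choose L) * (exp (lam*(real n * real L * N / Pp)) * ((2*lam+1) powr (-(real L-1)/2))^n)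
      + real (M choose 2) * (1 * ((2*lam2+1) powr (-1/2))^n) < real M / 2"
  shows "\<exists>C. list_decodable n P N L C \<and> real (card C) > real M / 2"
proof -
  define r where "r = P/Pp"
  define c where "c = real n * real L * N / Pp"
  define EE where "EE = real M * (exp (-t*n*r) * (1/sqrt(1-2*t))^n)
      + real (M choose L) * (exp (lam*c) * ((2*lam+1) powr (-(real L-1)/2))^n)
      + real (M choose 2) * (1 * ((2*lam2+1) powr (-1/2))^n)"
  have EE: "EE < real M / 2" using E unfolding EE_def r_def c_def .
  have int: "(\<integral>\<^sup>+\<omega>. PhiE n M L t lam lam2 (exp (-t*n*r)) (exp (lam*c)) \<omega> \<partial>OM n M) = ennreal EE"
    unfolding EE_def by (rule total_integral) (use t lam L in auto)
  interpret prob_space "OM n M" by (rule prob_OM)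
  have "\<exists>\<omega>\<in>space (OM n M). PhiE n M L t lam lam2 (exp (-t*n*r)) (exp (lam*c)) \<omega> < ennreal (real M / 2)"
  proof (rule ccontr)
    assume "\<not> ?thesis"
    then have ge: "\<And>\<omega>. \<omega> \<in> space (OM n M) \<Longrightarrow> ennreal (real M / 2) \<le> PhiE n M L t lam lam2 (exp (-t*n*r)) (exp (lam*c)) \<omega>"
      by (auto simp: not_less)
    have "ennreal (real M / 2) = (\<integral>\<^sup>+\<omega>. ennreal (real M / 2) \<partial>OM n M)"
      by (simp add: emeasure_space_1)
    also have "\<dots> \<le> (\<integral>\<^sup>+\<omega>. PhiE n M L t lam lam2 (exp (-t*n*r)) (exp (lam*c)) \<omega> \<partial>OM n M)"
      by (rule nn_integral_mono) (rule ge)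
    also have "\<dots> = ennreal EE" by (rule int)
    finally have "ennreal (real M / 2) \<le> ennreal EE" .
    moreover have "EE \<ge> 0" unfolding EE_def using t by (intro add_nonneg_nonneg mult_nonneg_nonneg) auto
    ultimately have "real M / 2 \<le> EE" by (simp add: ennreal_le_iff)
    then show False using EE by simp
  qed
  then obtain \<omega> where \<omega>: "PhiE n M L t lam lam2 (exp (-t*n*r)) (exp (lam*c)) \<omega> < ennreal (real M / 2)" by blast
  have "ennreal (real (card (BadS n M L r c \<omega>))) < ennreal (real M / 2)"
    using bad_bound[of t lam lam2 L n M r c \<omega>] t lam L \<omega> by (meson le_less_trans one_le_numeral order_trans)
  then have "real (card (BadS n M L r c \<omega>)) < real M / 2" by (simp add: ennreal_less_iff)
  then show ?thesis using construct[OF Pp P N L] unfolding r_def c_def by blast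
qed

lemma ln_strict:
  fixes \<theta> :: real
  assumes "0 < \<theta>" "\<theta> < 1"
  shows "ln \<theta> > 1 - 1/\<theta>"
proof -
  define q where "q = sqrt \<theta>"
  have q: "0 < q" "q < 1" using assms unfolding q_def by auto
  have th: "\<theta> = q\<^sup>2" unfolding q_def using assms by simp
  have "ln (1/q) \<le> 1/q - 1" by (rule ln_le_minus_one) (use q in simp)
  then have l1: "ln q \<ge> 1 - 1/q" using q by (simp add: ln_div)
  have "ln \<theta> = 2 * ln q" unfolding th using q by (simp add: ln_realpow)
  also have "\<dots> \<ge> 2*(1 - 1/q)" using l1 by simp
  finally have a: "ln \<theta> \<ge> 2*(1 - 1/q)" .
  have "2*(1 - 1/q) - (1 - 1/\<theta>) = (1 - 1/q)\<^sup>2" unfolding th using q by (simp add: field_simps power2_eq_square)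
  moreover have "(1 - 1/q)\<^sup>2 > 0" using q by simp
  ultimately show ?thesis using a by linarith
qed

lemma floor_half:
  fixes y :: real assumes "y \<ge> 1" shows "real (nat \<lfloor>y\<rfloor>) \<ge> y/2" "nat \<lfloor>y\<rfloor> \<ge> 1" "real (nat \<lfloor>y\<rfloor>) \<le> y"
proof -
  have f: "real (nat \<lfloor>y\<rfloor>) = of_int \<lfloor>y\<rfloor>" using assms by simp
  show "real (nat \<lfloor>y\<rfloor>) \<ge> y/2"
  proof (cases "y \<ge> 2")
    case True then show ?thesis unfolding f using real_of_int_floor_gt_diff_one[of y] by linarith
  next
    case False
    then have "\<lfloor>y\<rfloor> = 1" using assms by (simp add: floor_eq_iff)
    then show ?thesis unfolding f using False by simp
  qed
  show "nat \<lfloor>y\<rfloor> \<ge> 1" using assms by (simp add: le_nat_iff)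
  show "real (nat \<lfloor>y\<rfloor>) \<le> y" unfolding f by simp
qed

lemma code_for_n:
  fixes n L :: nat and P N \<theta> R1 :: real
  assumes P: "P > 0" and N: "N > 0" and L: "L \<ge> 2" and th: "0 < \<theta>" "\<theta> < 1"
    and rho: "(real L - 1)*(\<theta>*P)/(real L*N) > 1" and R1: "R1 \<ge> 0" and n: "n \<ge> 1"
    and c1: "exp (-(real n)*(((1-\<theta>)/\<theta> + ln \<theta>)/2)) \<le> 1/8"
    and c2: "exp (-(real n)*((ln ((real L - 1)*(\<theta>*P)/(real L*N)) + 1/((real L - 1)*(\<theta>*P)/(real L*N)) - 1)/2 - R1)) \<le> 1/8"
  shows "\<exists>C. list_decodable n P N L C \<and> real (card C) > exp (real n * R1) / 4"
proof -
  define \<rho> where "\<rho> = (real L - 1)*(\<theta>*P)/(real L*N)"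
  have rho1: "\<rho> > 1" using rho unfolding \<rho>_def .
  define g1 where "g1 = ((1-\<theta>)/\<theta> + ln \<theta>)/2"
  define f' where "f' = (ln \<rho> + 1/\<rho> - 1)/2"
  have c1': "exp (-(real n)*g1) \<le> 1/8" using c1 unfolding g1_def .
  have c2': "exp (-(real n)*(f' - R1)) \<le> 1/8" using c2 unfolding f'_def \<rho>_def .
  define Pp where "Pp = \<theta>*P"
  have Pp: "Pp > 0" unfolding Pp_def using th P by simp
  define t where "t = (1-\<theta>)/2"
  define lam where "lam = (\<rho>-1)/2"
  define y where "y = exp (real n * R1)"
  have y1: "y \<ge> 1" unfolding y_def using R1 by simp
  define M where "M = nat \<lfloor>y\<rfloor>"
  have M1: "M \<ge> 1" and My: "real M \<le> y" and My2: "real M \<ge> y/2" unfolding M_def using floor_half[OF y1] by auto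
  have Mpos: "real M > 0" using M1 by simp
  define lam2 where "lam2 = (64 * (real M)\<^sup>2 - 1)/2"
  have lam2: "lam2 \<ge> 0" unfolding lam2_def using M1
  proof -
    have "(real M)\<^sup>2 \<ge> 1" using M1 by simp
    then show "(64 * (real M)\<^sup>2 - 1)/2 \<ge> 0" by simp
  qed
  have t: "0 \<le> t" "t < 1/2" unfolding t_def using th by auto
  have lam: "lam \<ge> 0" unfolding lam_def using rho1 by simp
  have T1eq: "exp (-t*n*(P/Pp)) * (1/sqrt(1-2*t))^n = exp (-(real n)*g1)"
  proof -
    have a: "P/Pp = 1/\<theta>" unfolding Pp_def using P th by simp
    have b: "1-2*t = \<theta>" unfolding t_def by (simp add: field_simps)
    have c: "1/sqrt \<theta> = exp (-(ln \<theta>)/2)"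
    proof -
      have "sqrt \<theta> = exp (ln \<theta> / 2)" using th by (simp add: powr_half_sqrt[symmetric] powr_def)
      then show ?thesis by (simp add: exp_minus inverse_eq_divide)
    qed
    have "exp (-t*n*(P/Pp)) * (1/sqrt(1-2*t))^n = exp (-t*n*(1/\<theta>)) * exp (real n * (-(ln \<theta>)/2))"
      unfolding a b c exp_of_nat_mult ..
    also have "\<dots> = exp (-t*n*(1/\<theta>) + real n * (-(ln \<theta>)/2))" by (rule exp_add[symmetric])
    also have "-t*n*(1/\<theta>) + real n * (-(ln \<theta>)/2) = -(real n)*g1"
      unfolding t_def g1_def using th by (simp add: field_simps)
    finally show ?thesis .
  qed
  have T1: "real M * (exp (-t*n*(P/Pp)) * (1/sqrt(1-2*t))^n) \<le> real M / 8"
    unfolding T1eq using c1' Mpos by (simp add: mult_left_mono)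
  have T2eq: "exp (lam*(real n * real L * N / Pp)) * ((2*lam+1) powr (-(real L-1)/2))^n = exp (-(real n)*f') ^ (L-1)"
  proof -
    have a: "2*lam+1 = \<rho>" unfolding lam_def by (simp add: field_simps)
    have Lr: "real L * N / Pp = (real L - 1)/\<rho>" unfolding \<rho>_def Pp_def using L N P th by (simp add: field_simps)
    have b: "\<rho> powr (-(real L-1)/2) = exp (-(real L-1)/2 * ln \<rho>)" using rho1 by (simp add: powr_def)
    have "exp (lam*(real n * real L * N / Pp)) * ((2*lam+1) powr (-(real L-1)/2))^n
      = exp (lam*(real n * ((real L - 1)/\<rho>))) * exp (real n * (-(real L-1)/2 * ln \<rho>))"
    proof -
      have "real n * real L * N / Pp = real n * (real L * N / Pp)" by simp
      then have Lr2: "lam*(real n * real L * N / Pp) = lam*(real n * ((real L - 1)/\<rho>))" unfolding Lr by simp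
      show ?thesis unfolding a b exp_of_nat_mult[symmetric] Lr2 ..
    qed
    also have "\<dots> = exp (lam*(real n * ((real L - 1)/\<rho>)) + real n * (-(real L-1)/2 * ln \<rho>))" by (rule exp_add[symmetric])
    also have "lam*(real n * ((real L - 1)/\<rho>)) + real n * (-(real L-1)/2 * ln \<rho>) = real (L-1) * (-(real n)*f')"
      unfolding lam_def f'_def using rho1 L by (simp add: field_simps of_nat_diff)
    also have "exp (real (L-1) * (-(real n)*f')) = exp (-(real n)*f') ^ (L-1)" by (rule exp_of_nat_mult)
    finally show ?thesis .
  qed
  have T2: "real (M choose L) * (exp (lam*(real n * real L * N / Pp)) * ((2*lam+1) powr (-(real L-1)/2))^n) \<le> real M / 8"
  proof -
    have ch: "real (M choose L) \<le> real M * real M ^ (L-1)"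
    proof (cases "L \<le> M")
      case True
      have "M choose L \<le> M ^ L" by (rule binomial_le_pow[OF True])
      also have "M ^ L = M * M^(L-1)" using L by (metis One_nat_def Suc_pred' less_le_trans pos2 power_Suc zero_less_numeral)
      finally show ?thesis by (metis of_nat_le_iff of_nat_mult of_nat_power)
    next
      case False then have hml: "M < L" by simp
      have z: "M choose L = 0" by (rule binomial_eq_0[OF hml])
      show ?thesis unfolding z by simp
    qed
    have base: "real M * exp (-(real n)*f') \<le> 1/8"
    proof -
      have "real M * exp (-(real n)*f') \<le> y * exp (-(real n)*f')" using My by simp
      also have "\<dots> = exp (-(real n)*(f' - R1))" unfolding y_def by (simp add: exp_add[symmetric] algebra_simps)
      finally show ?thesis using c2' by simp
    qed
    have "(real M * exp (-(real n)*f')) ^ (L-1) \<le> (real M * exp (-(real n)*f')) ^ 1"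
      by (rule power_decreasing) (use L base in auto)
    then have pw: "real M ^ (L-1) * exp (-(real n)*f') ^ (L-1) \<le> 1/8" using base by (simp add: power_mult_distrib)
    have "real (M choose L) * exp (-(real n)*f') ^ (L-1) \<le> real M * real M ^ (L-1) * exp (-(real n)*f') ^ (L-1)"
      using ch by (simp add: mult_right_mono)
    also have "\<dots> = real M * (real M ^ (L-1) * exp (-(real n)*f') ^ (L-1))" by simp
    also have "\<dots> \<le> real M * (1/8)" using pw Mpos by (intro mult_left_mono) auto
    finally show ?thesis unfolding T2eq by simp
  qed
  have T3: "real (M choose 2) * (1 * ((2*lam2+1) powr (-1/2))^n) \<le> real M / 8"
  proof -
    have a: "2*lam2+1 = (8 * real M)\<^sup>2" unfolding lam2_def by (simp add: power2_eq_square field_simps)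
    have b: "(2*lam2+1) powr (-1/2) = 1 / (8 * real M)"
    proof -
      have sq: "sqrt ((8 * real M)\<^sup>2) = 8 * real M" using Mpos by (simp only: real_sqrt_abs)
      have "(8 * real M)\<^sup>2 powr (-1/2) = 1 / (8 * real M)\<^sup>2 powr (1/2)"
        by (simp add: powr_minus_divide)
      also have "\<dots> = 1 / (8 * real M)" unfolding powr_half_sqrt[OF zero_le_power2] sq ..
      finally show ?thesis unfolding a .
    qed
    have c: "(1 / (8 * real M)) ^ n \<le> (1 / (8 * real M)) ^ 1"
      by (rule power_decreasing) (use n M1 in auto)
    have d: "real (M choose 2) \<le> (real M)\<^sup>2"
    proof (cases "2 \<le> M")
      case True
      have "M choose 2 \<le> M ^ 2" by (rule binomial_le_pow[OF True])
      then show ?thesis by (metis of_nat_le_iff of_nat_power)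
    next
      case False then have hml: "M < 2" by simp
      have z: "M choose 2 = 0" by (rule binomial_eq_0[OF hml])
      show ?thesis unfolding z by simp
    qed
    have "real (M choose 2) * (1 * ((2*lam2+1) powr (-1/2))^n) \<le> (real M)\<^sup>2 * (1 / (8 * real M))"
      unfolding b using c d by (intro mult_mono) auto
    also have "\<dots> = real M / 8" using Mpos by (simp add: power2_eq_square)
    finally show ?thesis .
  qed
  have E: "real M * (exp (-t*n*(P/Pp)) * (1/sqrt(1-2*t))^n)
      + real (M choose L) * (exp (lam*(real n * real L * N / Pp)) * ((2*lam+1) powr (-(real L-1)/2))^n)
      + real (M choose 2) * (1 * ((2*lam2+1) powr (-1/2))^n) < real M / 2"
    using T1 T2 T3 Mpos by linarith
  obtain C where C: "list_decodable n P N L C" "real (card C) > real M / 2"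
    using exists_code[OF Pp P N L t lam lam2 E] by blast
  have "real (card C) > exp (real n * R1) / 4" using C(2) My2 unfolding y_def by linarith
  then show ?thesis using C(1) by blast
qed

lemma exp_small:
  fixes c :: real assumes c: "c > 0" and n: "real n \<ge> ln 8 / c"
  shows "exp (-(real n)*c) \<le> 1/8"
proof -
  have "real n * c \<ge> ln 8" using n c by (simp add: field_simps)
  then have "exp (-(real n)*c) \<le> exp (- ln 8)" by simp
  also have "\<dots> = 1/8" by (simp add: exp_minus inverse_eq_divide)
  finally show ?thesis .
qed

lemma ev_ge: "eventually (\<lambda>n. K \<le> real n) sequentially"
  using filterlim_real_sequentially unfolding filterlim_at_top by blast

theorem mainTheorem5:
  fixes P N :: real and L :: nat
  assumes "P > 0" and "N > 0" and "L \<ge> 2"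
    and "N / P \<le> (real L - 1) / real L"
  shows "ereal ((1/2) * (ln ((real L - 1) * P / (real L * N)) + real L * N / ((real L - 1) * P) - 1))
           \<le> avg_rad_capacity L P N"
proof -
  note P = assms(1) and N = assms(2) and L = assms(3)
  define a where "a n = (SUP C\<in>{C. list_decodable n P N L C}. ereal (code_rate n C))" for n
  have cap: "avg_rad_capacity L P N = limsup a" unfolding avg_rad_capacity_def a_def ..
  define \<rho> where "\<rho> = (real L - 1) * P / (real L * N)"
  define f where "f x = (1/2) * (ln x + 1/x - 1)" for x :: real
  have Lr: "real L \<ge> 2" using L by simp
  have rpos: "\<rho> > 0" unfolding \<rho>_def using P N Lr by simp
  have tgt: "(1/2) * (ln ((real L - 1) * P / (real L * N)) + real L * N / ((real L - 1) * P) - 1) = f \<rho>"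
    unfolding f_def \<rho>_def by simp
  have rho1: "\<rho> \<ge> 1"
  proof -
    have "N * real L \<le> (real L - 1) * P" using assms(4) P Lr by (simp add: field_simps)
    then show ?thesis unfolding \<rho>_def using N Lr by (simp add: field_simps)
  qed
  have a_ge: "ereal (code_rate n C) \<le> a n" if "list_decodable n P N L C" for n C
    unfolding a_def by (rule SUP_upper) (use that in simp)
  have a0: "0 \<le> a n" for n
  proof -
    have "list_decodable n P N L {}" unfolding list_decodable_def using L by auto
    then have "ereal (code_rate n {}) \<le> a n" by (rule a_ge)
    then show ?thesis by (simp add: code_rate_def zero_ereal_def)
  qed
  have key: "ereal R \<le> limsup a" if R: "R < f \<rho>" for R
  proof (cases "R \<le> 0")
    case True
    have "ereal R \<le> 0" using True by simp
    also have "0 \<le> limsup a" by (rule le_Limsup) (use a0 in auto)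
    finally show ?thesis .
  next
    case False
    then have R0: "R > 0" by simp
    have r1: "\<rho> > 1"
    proof (rule ccontr)
      assume "\<not> \<rho> > 1"
      then have "\<rho> = 1" using rho1 by simp
      then have "f \<rho> = 0" unfolding f_def by simp
      then show False using R R0 by simp
    qed
    have lim: "((\<lambda>\<theta>. f (\<rho>*\<theta>)) \<longlongrightarrow> f (\<rho>*1)) (at_left 1)"
      unfolding f_def by (intro tendsto_intros) (use rpos in auto)
    have ev1: "eventually (\<lambda>\<theta>. R < f (\<rho>*\<theta>)) (at_left (1::real))"
      by (rule order_tendstoD(1)[OF lim]) (use R in simp)
    have lim2: "((\<lambda>\<theta>. \<rho>*\<theta>) \<longlongrightarrow> \<rho>*1) (at_left (1::real))" by (intro tendsto_intros)
    have ev2: "eventually (\<lambda>\<theta>. 1 < \<rho>*\<theta>) (at_left (1::real))"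
      by (rule order_tendstoD(1)[OF lim2]) (use r1 in simp)
    have ev3: "eventually (\<lambda>\<theta>. \<theta> \<in> {0<..<1}) (at_left (1::real))" by (rule eventually_at_left_real) simp
    obtain \<theta> :: real where th: "R < f (\<rho>*\<theta>)" "1 < \<rho>*\<theta>" "\<theta> \<in> {0<..<1}"
      using eventually_happens'[OF _ eventually_conj[OF ev1 eventually_conj[OF ev2 ev3]]] by auto
    have th0: "0 < \<theta>" "\<theta> < 1" using th(3) by auto
    define fp where "fp = f (\<rho>*\<theta>)"
    define R1 where "R1 = (R + fp)/2"
    have R1: "R < R1" "R1 < fp" "R1 \<ge> 0" unfolding R1_def fp_def using th(1) R0 by auto
    define g1 where "g1 = ((1-\<theta>)/\<theta> + ln \<theta>)/2"
    have g1: "g1 > 0" unfolding g1_def using ln_strict[OF th0] th0 by (simp add: field_simps)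
    have rth: "(real L - 1)*(\<theta>*P)/(real L*N) = \<rho>*\<theta>" unfolding \<rho>_def by simp
    have ev: "eventually (\<lambda>n. 1 \<le> real n \<and> ln 8 / g1 \<le> real n \<and> ln 8 / (fp - R1) \<le> real n \<and> ln 4 / (R1 - R) \<le> real n) sequentially"
      by (intro eventually_conj ev_ge)
    have "eventually (\<lambda>n. ereal R \<le> a n) sequentially"
    proof (rule eventually_mono[OF ev])
      fix n assume hn: "1 \<le> real n \<and> ln 8 / g1 \<le> real n \<and> ln 8 / (fp - R1) \<le> real n \<and> ln 4 / (R1 - R) \<le> real n"
      have n1: "n \<ge> 1" using hn by simp
      have c1: "exp (-(real n)*(((1-\<theta>)/\<theta> + ln \<theta>)/2)) \<le> 1/8"
        using exp_small[OF g1, of n] hn unfolding g1_def by simp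
      have c2: "exp (-(real n)*((ln ((real L - 1)*(\<theta>*P)/(real L*N)) + 1/((real L - 1)*(\<theta>*P)/(real L*N)) - 1)/2 - R1)) \<le> 1/8"
        using exp_small[of "fp - R1" n] hn R1 unfolding rth fp_def f_def by simp
      obtain C where C: "list_decodable n P N L C" "real (card C) > exp (real n * R1) / 4"
        using code_for_n[OF P N L th0 _ R1(3) n1 c1 c2] th(2) rth by auto
      have "ln (real (card C)) \<ge> ln (exp (real n * R1) / 4)"
      proof -
        have p1: "0 < exp (real n * R1) / 4" by simp
        then have p2: "0 < real (card C)" using C(2) by linarith
        show ?thesis using ln_le_cancel_iff[OF p1 p2] C(2) by simp
      qed
      also have "ln (exp (real n * R1) / 4) = real n * R1 - ln 4" by (simp add: ln_div)
      finally have lnC: "ln (real (card C)) \<ge> real n * R1 - ln 4" .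
      have "real n * (R1 - R) \<ge> ln 4" using hn R1 by (simp add: field_simps)
      then have "real n * R \<le> ln (real (card C))" using lnC by (simp add: algebra_simps)
      then have "R \<le> code_rate n C" unfolding code_rate_def using n1 by (simp add: field_simps)
      then have "ereal R \<le> ereal (code_rate n C)" by simp
      also have "\<dots> \<le> a n" by (rule a_ge[OF C(1)])
      finally show "ereal R \<le> a n" .
    qed
    then show ?thesis by (intro le_Limsup) auto
  qed
  have "ereal (f \<rho>) \<le> limsup a"
  proof (rule dense_le)
    fix y assume y: "y < ereal (f \<rho>)"
    show "y \<le> limsup a"
    proof (cases y)
      case (real R) then show ?thesis using key y by simp
    next
      case PInf then show ?thesis using y by simp
    next
      case MInf then show ?thesis by simp
    qed
  qed
  then show ?thesis unfolding tgt cap .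
qed

end
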